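(* Let $F_c$ be a CABA framework. For every set $C$ of constraints, set $A$ of assumptions, set $R$ of rules and atom $p(\mathsf t)$: $C\cup A\vdash_R p(\mathsf t)\in\mathit{TCArg}$ if and only if there exists $C'\cup A'\vdash_R p(\mathsf X)\in\mathit{MGCArg}$ such that, for $\vartheta=\{\mathsf X/\mathsf t\}$, we have $C=C'\vartheta$, $A=A'\vartheta$, and $C'\vartheta$ is consistent.
   Context: Conventions. $\mathsf X$ denotes a tuple of variables and $\mathsf t$ a tuple of terms. A substitution $\vartheta=\{X_1/t_1,\dots,X_n/t_n\}$ maps distinct variables to terms; $e\vartheta$ replaces each occurrence of $X_i$ in $e$ by $t_i$; $\{\mathsf X/\mathsf t\}$ maps $\mathsf X$ componentwise to $\mathsf t$. Theory of constraints. $\mathcal{CT}$ is a first-order theory with equality whose atomic formulas form the set $\mathcal C$ of constraints; a finite set $\{c_1,\dots,c_n\}\subseteq\mathcal C$ is consistent if $\mathcal{CT}\models\exists(c_1\wedge\dots\wedge c_n)$. CABA framework $F_c=\langle\mathcal L_c,\mathcal C,\mathcal R,\mathcal{CT},\mathcal A,\overline{\cdot}\rangle$: $\mathcal L_c$ a set of atoms; $\mathcal C\subseteq\mathcal L_c$ the constraints of $\mathcal{CT}$; $\mathcal R$ a set of rules $s_0\leftarrow s_1,\dots,s_m$ ($s_0\in\mathcal L_c\setminus\mathcal C$, $s_i\in\mathcal L_c$), written in normalised form $p(\mathsf X_0)\leftarrow C,p_1(\mathsf X_1),\dots,p_m(\mathsf X_m)$ with $C\subseteq\mathcal C$ and each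 $\mathsf X_i$ a tuple of distinct variables; $\mathcal A\subseteq\mathcal L_c\setminus\mathcal C$ a nonempty set of assumptions that are not heads of rules; $\overline\cdot:\mathcal A\to\mathcal L_c\setminus\mathcal C$ a total contrary map with $\overline{p(\mathsf t)}=cp(\mathsf t)$ for a fixed predicate $cp$ per assumption predicate $p$; $\mathcal L_c,\mathcal C,\mathcal A$ predicate closed. Tight constrained argument. For consistent $C\subseteq\mathcal C$, $A\subseteq\mathcal A$, $R\subseteq\mathcal R$, a tight constrained argument for claim $s\in\mathcal L_c\setminus\mathcal C$ supported by $C\cup A$ and $R$, written $C\cup A\vdash_R s$, is a finite tree with root $s$ in which every non-leaf node $p(\mathsf t)$ has as children exactly the atoms $s_1\vartheta,\dots,s_m\vartheta$ for exactly one renamed-apart (fresh-variable) copy $p(\mathsf X)\leftarrow s_1,\dots,s_m$ of a rule in $R$, with $\vartheta=\{\mathsf X/\mathsf t\}$ (or the single child true if the rule is a fact), and every leaf is a constraint in $C$, an assumption in $A$, or true; $C$ and $A$ are exactly the constraints and assumptions occurring in the tree and $R$ the rules used. A most general constrained argument is a tight constrained argument whose claim has the form $p(\mathsf X)$ with $\mathsf X$ a tuple of variables. $\mathit{TCArg}$ and $\mathit{MGCArg}$ denote the sets of tight and of most general constrained arguments of $F_c$.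
   Formalization: The most general argument $C'\cup A'\vdash_R p(\mathsf X)$ in the equivalence also has all its variables other than those of $\mathsf X$ absent from $\mathsf t$, so it is standardised apart from $\mathsf t$. The statement above fails without it. *)

theory Defs
  imports Main
begin

datatype ('f, 'v) trm = Var 'v | Fn 'f "('f, 'v) trm list"

datatype ('p, 'f, 'v) atm = Atm 'p "('f, 'v) trm list"

fun subst_trm :: "('v \<Rightarrow> ('f, 'v) trm) \<Rightarrow> ('f, 'v) trm \<Rightarrow> ('f, 'v) trm" where
  "subst_trm s (Var x) = s x"
| "subst_trm s (Fn f ts) = Fn f (map (subst_trm s) ts)"

fun vars_trm :: "('f, 'v) trm \<Rightarrow> 'v set" where
  "vars_trm (Var x) = {x}"
| "vars_trm (Fn f ts) = \<Union> (set (map vars_trm ts))"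

fun subst_atm :: "('v \<Rightarrow> ('f, 'v) trm) \<Rightarrow> ('p, 'f, 'v) atm \<Rightarrow> ('p, 'f, 'v) atm" where
  "subst_atm s (Atm p ts) = Atm p (map (subst_trm s) ts)"

fun vars_atm :: "('p, 'f, 'v) atm \<Rightarrow> 'v set" where
  "vars_atm (Atm p ts) = \<Union> (set (map vars_trm ts))"

definition mk_subst :: "'v list \<Rightarrow> ('f, 'v) trm list \<Rightarrow> 'v \<Rightarrow> ('f, 'v) trm" where
  "mk_subst Xs ts = (\<lambda>x. case map_of (zip Xs ts) x of Some t \<Rightarrow> t | None \<Rightarrow> Var x)"

datatype ('p, 'f, 'v) rule = Rule (head: "('p, 'f, 'v) atm") (body: "('p, 'f, 'v) atm list")

definition rename_rule :: "('v \<Rightarrow> 'v) \<Rightarrow> ('p, 'f, 'v) rule \<Rightarrow> ('p, 'f, 'v) rule" where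
  "rename_rule \<sigma> r = Rule (subst_atm (Var \<circ> \<sigma>) (head r)) (map (subst_atm (Var \<circ> \<sigma>)) (body r))"

definition rule_vars :: "('p, 'f, 'v) rule \<Rightarrow> 'v set" where
  "rule_vars r = vars_atm (head r) \<union> \<Union> (set (map vars_atm (body r)))"

type_synonym ('d, 'f, 'p) struct = "('f \<Rightarrow> 'd list \<Rightarrow> 'd) \<times> ('p \<Rightarrow> 'd list \<Rightarrow> bool)"

fun eval_trm :: "('d, 'f, 'p) struct \<Rightarrow> ('v \<Rightarrow> 'd) \<Rightarrow> ('f, 'v) trm \<Rightarrow> 'd" where
  "eval_trm M v (Var x) = v x"
| "eval_trm M v (Fn f ts) = fst M f (map (eval_trm M v) ts)"

fun holds_atm :: "('d, 'f, 'p) struct \<Rightarrow> ('v \<Rightarrow> 'd) \<Rightarrow> ('p, 'f, 'v) atm \<Rightarrow> bool" where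
  "holds_atm M v (Atm p ts) = snd M p (map (eval_trm M v) ts)"

text \<open>CT |= exists (c1 /\ ... /\ cn), where CT is given by its class of models.\<close>
definition consistent :: "('d, 'f, 'p) struct set \<Rightarrow> ('p, 'f, 'v) atm set \<Rightarrow> bool" where
  "consistent CT S \<longleftrightarrow> finite S \<and> (\<forall>M\<in>CT. \<exists>v. \<forall>c\<in>S. holds_atm M v c)"

definition pred_closed :: "('p, 'f, 'v) atm set \<Rightarrow> bool" where
  "pred_closed S \<longleftrightarrow> (\<forall>p ts ts'. Atm p ts \<in> S \<longrightarrow> length ts' = length ts \<longrightarrow> Atm p ts' \<in> S)"

definition normalised_rule :: "('p, 'f, 'v) atm set \<Rightarrow> ('p, 'f, 'v) rule \<Rightarrow> bool" where
  "normalised_rule Cc r \<longleftrightarrow>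
     (\<exists>p Xs. head r = Atm p (map Var Xs) \<and> distinct Xs) \<and>
     (\<forall>b\<in>set (body r). b \<notin> Cc \<longrightarrow> (\<exists>q Ys. b = Atm q (map Var Ys) \<and> distinct Ys))"

text \<open>Lc: language; Cc: constraints; Rf: rules; CT: models of the theory of constraints;
  Af: assumptions; ctr: contrary map; eqp: the equality predicate of CT.\<close>
definition caba_framework ::
  "('p, 'f, 'v) atm set \<Rightarrow> ('p, 'f, 'v) atm set \<Rightarrow> ('p, 'f, 'v) rule set \<Rightarrow>
   ('d, 'f, 'p) struct set \<Rightarrow> ('p, 'f, 'v) atm set \<Rightarrow> (('p, 'f, 'v) atm \<Rightarrow> ('p, 'f, 'v) atm) \<Rightarrow> 'p \<Rightarrow> bool" where
  "caba_framework Lc Cc Rf CT Af ctr eqp \<longleftrightarrow>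
     infinite (UNIV :: 'v set) \<and>
     Cc \<subseteq> Lc \<and>
     (\<forall>x y. Atm eqp [x, y] \<in> Cc) \<and>
     (\<forall>M\<in>CT. \<forall>ds. snd M eqp ds \<longleftrightarrow> (\<exists>a b. ds = [a, b] \<and> a = b)) \<and>
     (\<forall>r\<in>Rf. head r \<in> Lc - Cc \<and> set (body r) \<subseteq> Lc \<and> normalised_rule Cc r) \<and>
     Af \<subseteq> Lc - Cc \<and> Af \<noteq> {} \<and>
     (\<forall>r\<in>Rf. head r \<notin> Af) \<and>
     (\<forall>a\<in>Af. ctr a \<in> Lc - Cc) \<and>
     (\<exists>cp. \<forall>p ts. Atm p ts \<in> Af \<longrightarrow> ctr (Atm p ts) = Atm (cp p) ts) \<and>
     pred_closed Lc \<and> pred_closed Cc \<and> pred_closed Af"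

text \<open>Leaves are atoms (constraints/assumptions) or true; an inner node records its label,
  the rule of the framework used and the variable renaming giving the renamed-apart copy.\<close>
datatype ('p, 'f, 'v) ctree =
    CLeaf "('p, 'f, 'v) atm"
  | TLeaf
  | CNode "('p, 'f, 'v) atm" "('p, 'f, 'v) rule" "'v \<Rightarrow> 'v" "('p, 'f, 'v) ctree list"

fun label :: "('p, 'f, 'v) ctree \<Rightarrow> ('p, 'f, 'v) atm option" where
  "label (CLeaf a) = Some a"
| "label TLeaf = None"
| "label (CNode a r \<sigma> ts) = Some a"

definition node_ok :: "('p, 'f, 'v) atm \<Rightarrow> ('p, 'f, 'v) rule \<Rightarrow> ('p, 'f, 'v) ctree list \<Rightarrow> bool" where
  "node_ok a r' ts \<longleftrightarrow>
     (\<exists>p Xs targs. head r' = Atm p (map Var Xs) \<and> a = Atm p targs \<and> length Xs = length targs \<and>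
        (if body r' = [] then ts = [TLeaf]
         else map label ts = map (\<lambda>s. Some (subst_atm (mk_subst Xs targs) s)) (body r')))"

fun wf_tree :: "('p, 'f, 'v) atm set \<Rightarrow> ('p, 'f, 'v) atm set \<Rightarrow> ('p, 'f, 'v) rule set \<Rightarrow>
    ('p, 'f, 'v) ctree \<Rightarrow> bool" where
  "wf_tree Cc Af Rf (CLeaf a) \<longleftrightarrow> a \<in> Cc \<or> a \<in> Af"
| "wf_tree Cc Af Rf TLeaf \<longleftrightarrow> True"
| "wf_tree Cc Af Rf (CNode a r \<sigma> ts) \<longleftrightarrow>
     r \<in> Rf \<and> inj_on \<sigma> (rule_vars r) \<and> node_ok a (rename_rule \<sigma> r) ts \<and>
     (\<forall>t\<in>set ts. wf_tree Cc Af Rf t)"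

fun fresh_vars :: "('p, 'f, 'v) ctree \<Rightarrow> 'v set list" where
  "fresh_vars (CLeaf a) = []"
| "fresh_vars TLeaf = []"
| "fresh_vars (CNode a r \<sigma> ts) =
     (\<Union> (set (map vars_atm (body (rename_rule \<sigma> r)))) - vars_atm (head (rename_rule \<sigma> r)))
     # concat (map fresh_vars ts)"

definition renamed_apart :: "('p, 'f, 'v) atm \<Rightarrow> ('p, 'f, 'v) ctree \<Rightarrow> bool" where
  "renamed_apart s T \<longleftrightarrow>
     (let L = fresh_vars T in
       (\<forall>i<length L. L ! i \<inter> vars_atm s = {}) \<and>
       (\<forall>i<length L. \<forall>j<length L. i \<noteq> j \<longrightarrow> L ! i \<inter> L ! j = {}))"

fun leaves :: "('p, 'f, 'v) ctree \<Rightarrow> ('p, 'f, 'v) atm set" where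
  "leaves (CLeaf a) = {a}"
| "leaves TLeaf = {}"
| "leaves (CNode a r \<sigma> ts) = \<Union> (set (map leaves ts))"

fun rules_used :: "('p, 'f, 'v) ctree \<Rightarrow> ('p, 'f, 'v) rule set" where
  "rules_used (CLeaf a) = {}"
| "rules_used TLeaf = {}"
| "rules_used (CNode a r \<sigma> ts) = insert r (\<Union> (set (map rules_used ts)))"

definition tight_arg ::
  "('p, 'f, 'v) atm set \<Rightarrow> ('p, 'f, 'v) atm set \<Rightarrow> ('p, 'f, 'v) rule set \<Rightarrow>
   ('d, 'f, 'p) struct set \<Rightarrow> ('p, 'f, 'v) atm set \<Rightarrow>
   ('p, 'f, 'v) atm set \<Rightarrow> ('p, 'f, 'v) atm set \<Rightarrow> ('p, 'f, 'v) rule set \<Rightarrow> ('p, 'f, 'v) atm \<Rightarrow> bool" where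
  "tight_arg Lc Cc Rf CT Af C A R s \<longleftrightarrow>
     s \<in> Lc - Cc \<and> C \<subseteq> Cc \<and> A \<subseteq> Af \<and> R \<subseteq> Rf \<and> consistent CT C \<and>
     (\<exists>T. wf_tree Cc Af Rf T \<and> label T = Some s \<and> renamed_apart s T \<and>
          C = leaves T \<inter> Cc \<and> A = leaves T \<inter> Af \<and> R = rules_used T)"

definition mg_arg ::
  "('p, 'f, 'v) atm set \<Rightarrow> ('p, 'f, 'v) atm set \<Rightarrow> ('p, 'f, 'v) rule set \<Rightarrow>
   ('d, 'f, 'p) struct set \<Rightarrow> ('p, 'f, 'v) atm set \<Rightarrow>
   ('p, 'f, 'v) atm set \<Rightarrow> ('p, 'f, 'v) atm set \<Rightarrow> ('p, 'f, 'v) rule set \<Rightarrow> ('p, 'f, 'v) atm \<Rightarrow> bool" where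
  "mg_arg Lc Cc Rf CT Af C A R s \<longleftrightarrow>
     tight_arg Lc Cc Rf CT Af C A R s \<and> (\<exists>p Xs. distinct Xs \<and> s = Atm p (map Var Xs))"

end

theory Submission
  imports Defs
begin

lemma subst_trm_comp: "subst_trm f (subst_trm g t) = subst_trm (\<lambda>x. subst_trm f (g x)) t"
  by (induction t) auto
lemma subst_atm_comp: "subst_atm f (subst_atm g a) = subst_atm (\<lambda>x. subst_trm f (g x)) a"
  by (cases a) (auto simp: subst_trm_comp)
lemma subst_trm_cong: "(\<And>x. x \<in> vars_trm t \<Longrightarrow> f x = g x) \<Longrightarrow> subst_trm f t = subst_trm g t"
  by (induction t) auto
lemma subst_atm_cong: "(\<And>x. x \<in> vars_atm a \<Longrightarrow> f x = g x) \<Longrightarrow> subst_atm f a = subst_atm g a"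
  by (cases a) (auto intro: subst_trm_cong)
lemma vars_subst_trm: "vars_trm (subst_trm f t) = \<Union> (vars_trm ` f ` vars_trm t)"
  by (induction t) auto
lemma vars_subst_atm: "vars_atm (subst_atm f a) = \<Union> (vars_trm ` f ` vars_atm a)"
  by (cases a) (auto simp: vars_subst_trm)
lemma subst_trm_Var[simp]: "subst_trm Var t = t"
  by (induction t) (auto simp: map_idI)
lemma subst_atm_Var[simp]: "subst_atm Var a = a"
  by (cases a) (auto simp: map_idI)
lemma eval_subst: "eval_trm M v (subst_trm f t) = eval_trm M (\<lambda>x. eval_trm M v (f x)) t"
  by (induction t) (auto simp: comp_def cong: map_cong)
lemma holds_subst: "holds_atm M v (subst_atm f a) = holds_atm M (\<lambda>x. eval_trm M v (f x)) a"
  by (cases a) (auto simp: eval_subst comp_def)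
lemma finite_vars_trm[simp]: "finite (vars_trm t)"
  by (induction t) auto
lemma finite_vars_atm[simp]: "finite (vars_atm a)"
  by (cases a) auto

lemma map_of_zip_map:
  "length Zs = length us \<Longrightarrow> inj_on \<rho> (insert y (set Zs)) \<Longrightarrow>
   map_of (zip (map \<rho> Zs) (map g us)) (\<rho> y) = map_option g (map_of (zip Zs us) y)"
proof (induction Zs us rule: list_induct2)
  case Nil then show ?case by simp
next
  case (Cons z Zs u us)
  have "inj_on \<rho> (insert y (set Zs))" using Cons.prems by (auto intro: inj_on_subset)
  then show ?case using Cons by (auto dest: inj_onD)
qed

lemma mk_subst_notin: "y \<notin> set Xs \<Longrightarrow> mk_subst Xs ts y = Var y"
  unfolding mk_subst_def by (auto split: option.split dest: map_of_SomeD in_set_zipE)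

lemma mk_subst_Vars: "distinct Xs \<Longrightarrow> length Xs = length ts \<Longrightarrow> map (subst_trm (mk_subst Xs ts)) (map Var Xs) = ts"
  unfolding mk_subst_def
  by (auto intro!: nth_equalityI simp: map_of_zip_nth)

lemma key:
  assumes "inj_on \<rho> (set Zs \<union> vars_atm s)" "length Zs = length us"
    "\<forall>y\<in>vars_atm s - set Zs. \<theta> (\<rho> y) = Var (\<rho> y)"
  shows "subst_atm (mk_subst (map \<rho> Zs) (map (subst_trm (\<lambda>x. \<theta> (\<rho> x))) us)) (subst_atm (Var \<circ> \<rho>) s)
       = subst_atm (\<lambda>x. \<theta> (\<rho> x)) (subst_atm (mk_subst Zs us) s)"
  unfolding subst_atm_comp
proof (rule subst_atm_cong)
  fix y assume y: "y \<in> vars_atm s"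
  have inj: "inj_on \<rho> (insert y (set Zs))" by (rule inj_on_subset[OF assms(1)]) (use y in auto)
  have m: "map_of (zip (map \<rho> Zs) (map (subst_trm (\<lambda>x. \<theta> (\<rho> x))) us)) (\<rho> y)
     = map_option (subst_trm (\<lambda>x. \<theta> (\<rho> x))) (map_of (zip Zs us) y)"
    by (rule map_of_zip_map[OF assms(2) inj])
  show "subst_trm (mk_subst (map \<rho> Zs) (map (subst_trm (\<lambda>x. \<theta> (\<rho> x))) us)) ((Var \<circ> \<rho>) y) =
         subst_trm (\<lambda>x. \<theta> (\<rho> x)) (mk_subst Zs us y)"
  proof (cases "map_of (zip Zs us) y")
    case None
    then have "y \<notin> set Zs" using assms(2) by simp
    then show ?thesis using None m assms(3) y by (simp add: mk_subst_def)
  next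
    case (Some t)
    then show ?thesis using m by (simp add: mk_subst_def)
  qed
qed

lemma head_rename: "head (rename_rule \<sigma> r) = subst_atm (Var \<circ> \<sigma>) (head r)"
  and body_rename: "body (rename_rule \<sigma> r) = map (subst_atm (Var \<circ> \<sigma>)) (body r)"
  by (simp_all add: rename_rule_def)

lemma rename_rule_comp: "rename_rule (\<rho> \<circ> \<sigma>) r = rename_rule \<rho> (rename_rule \<sigma> r)"
  by (simp add: rename_rule_def subst_atm_comp comp_def)

lemma vars_rename_atm: "vars_atm (subst_atm (Var \<circ> \<sigma>) a) = \<sigma> ` vars_atm a"
  by (auto simp: vars_subst_atm)

lemma rule_vars_rename: "rule_vars (rename_rule \<sigma> r) = \<sigma> ` rule_vars r"
  by (auto simp: rule_vars_def vars_rename_atm head_rename body_rename)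

lemma vars_atm_Vars[simp]: "vars_atm (Atm p (map Var Xs)) = set Xs"
  by auto

lemma rename_Vars[simp]: "subst_atm (Var \<circ> \<rho>) (Atm p (map Var Xs)) = Atm p (map Var (map \<rho> Xs))"
  by simp

lemma pc_subst0: "pred_closed S \<Longrightarrow> (subst_atm f (Atm q us) \<in> S) = (Atm q us \<in> S)"
  unfolding pred_closed_def by simp (metis length_map)
lemma pc_subst: "pred_closed S \<Longrightarrow> (subst_atm f a \<in> S) = (a \<in> S)"
  by (cases a) (simp only: pc_subst0)

lemma vars_mk_subst:
  assumes "length Zs = length us"
  shows "vars_atm (subst_atm (mk_subst Zs us) s) \<subseteq> \<Union>(set (map vars_trm us)) \<union> (vars_atm s - set Zs)"
proof
  fix z assume "z \<in> vars_atm (subst_atm (mk_subst Zs us) s)"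
  then obtain x where x: "x \<in> vars_atm s" "z \<in> vars_trm (mk_subst Zs us x)"
    by (auto simp: vars_subst_atm)
  show "z \<in> \<Union>(set (map vars_trm us)) \<union> (vars_atm s - set Zs)"
  proof (cases "map_of (zip Zs us) x")
    case None
    then have "mk_subst Zs us x = Var x" by (simp add: mk_subst_def)
    moreover have "x \<notin> set Zs" using None assms by simp
    ultimately show ?thesis using x by auto
  next
    case (Some t)
    then have "t \<in> set us" by (auto dest: map_of_SomeD in_set_zipE)
    then show ?thesis using x Some by (auto simp: mk_subst_def)
  qed
qed

lemma key_id:
  assumes "length Zs = length us" "\<forall>y\<in>vars_atm s - set Zs. \<theta> y = Var y"
  shows "subst_atm (mk_subst Zs (map (subst_trm \<theta>) us)) s = subst_atm \<theta> (subst_atm (mk_subst Zs us) s)"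
  using key[of id Zs s us \<theta>] assms by simp

fun tvars :: "('p, 'f, 'v) ctree \<Rightarrow> 'v set" where
  "tvars (CLeaf a) = vars_atm a"
| "tvars TLeaf = {}"
| "tvars (CNode a r \<sigma> ts) = vars_atm a \<union> rule_vars (rename_rule \<sigma> r) \<union> \<Union> (set (map tvars ts))"

lemma finite_rule_vars[simp]: "finite (rule_vars r)"
  by (simp add: rule_vars_def)

lemma finite_tvars[simp]: "finite (tvars T)"
  by (induction T) auto

lemma finite_leaves[simp]: "finite (leaves T)"
  by (induction T) auto

lemma fresh_sub_tvars: "A \<in> set (fresh_vars T) \<Longrightarrow> A \<subseteq> tvars T"
proof (induction T arbitrary: A)
  case (CNode a r \<sigma> ts)
  then show ?case by (fastforce simp: rule_vars_def)
qed auto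

lemma leaves_wf: "wf_tree Cc Af Rf T \<Longrightarrow> leaves T \<subseteq> Cc \<union> Af"
  by (induction T) auto

fun gmap :: "('v \<Rightarrow> 'v) \<Rightarrow> ('v \<Rightarrow> ('f, 'v) trm) \<Rightarrow> ('p, 'f, 'v) ctree \<Rightarrow> ('p, 'f, 'v) ctree" where
  "gmap \<rho> \<theta> (CLeaf a) = CLeaf (subst_atm (\<lambda>x. \<theta> (\<rho> x)) a)"
| "gmap \<rho> \<theta> TLeaf = TLeaf"
| "gmap \<rho> \<theta> (CNode a r \<sigma> ts) = CNode (subst_atm (\<lambda>x. \<theta> (\<rho> x)) a) r (\<rho> \<circ> \<sigma>) (map (gmap \<rho> \<theta>) ts)"

lemma label_gmap: "label (gmap \<rho> \<theta> T) = map_option (subst_atm (\<lambda>x. \<theta> (\<rho> x))) (label T)"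
  by (cases T) auto

lemma leaves_gmap: "leaves (gmap \<rho> \<theta> T) = subst_atm (\<lambda>x. \<theta> (\<rho> x)) ` leaves T"
  by (induction T) (auto simp: image_Union)

lemma rules_gmap: "rules_used (gmap \<rho> \<theta> T) = rules_used T"
  by (induction T) auto

lemma fresh_gmap: "inj_on \<rho> (tvars T) \<Longrightarrow> fresh_vars (gmap \<rho> \<theta> T) = map ((`) \<rho>) (fresh_vars T)"
proof (induction T)
  case (CNode a r \<sigma> ts)
  let ?r = "rename_rule \<sigma> r"
  have inj: "inj_on \<rho> (rule_vars ?r)" using CNode.prems by (auto intro: inj_on_subset)
  have "(\<Union> (set (map vars_atm (body (rename_rule (\<rho> \<circ> \<sigma>) r)))) - vars_atm (head (rename_rule (\<rho> \<circ> \<sigma>) r)))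
     = \<rho> ` (\<Union> (set (map vars_atm (body ?r)))) - \<rho> ` vars_atm (head ?r)"
    unfolding rename_rule_comp by (auto simp: vars_rename_atm head_rename body_rename)
  also have "\<dots> = \<rho> ` (\<Union> (set (map vars_atm (body ?r))) - vars_atm (head ?r))"
    by (rule inj_on_image_set_diff[OF inj, symmetric]) (auto simp: rule_vars_def)
  finally have 1: "(\<Union> (set (map vars_atm (body (rename_rule (\<rho> \<circ> \<sigma>) r)))) - vars_atm (head (rename_rule (\<rho> \<circ> \<sigma>) r)))
      = \<rho> ` (\<Union> (set (map vars_atm (body ?r))) - vars_atm (head ?r))" .
  have 2: "map (fresh_vars \<circ> gmap \<rho> \<theta>) ts = map (map ((`) \<rho>) \<circ> fresh_vars) ts"
    using CNode by (auto intro: inj_on_subset)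
  have 3: "map fresh_vars (map (gmap \<rho> \<theta>) ts) = map (map ((`) \<rho>)) (map fresh_vars ts)"
    using 2 by simp
  show ?case by (simp only: gmap.simps fresh_vars.simps 1 3 map_concat list.map(2))
qed auto

lemma wf_gmap:
  assumes "wf_tree Cc Af Rf T" "inj_on \<rho> (tvars T)"
    "\<forall>A\<in>set (fresh_vars T). \<forall>y\<in>A. \<theta> (\<rho> y) = Var (\<rho> y)" "pred_closed Cc" "pred_closed Af"
  shows "wf_tree Cc Af Rf (gmap \<rho> \<theta> T)"
  using assms
proof (induction T)
  case (CLeaf a) then show ?case by (simp add: pc_subst)
next
  case TLeaf show ?case by simp
next
  case (CNode a r \<sigma> ts)
  define r' where "r' = rename_rule \<sigma> r"
  define \<eta> where "\<eta> = (\<lambda>x. \<theta> (\<rho> x))"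
  from CNode.prems have wf: "r \<in> Rf" "inj_on \<sigma> (rule_vars r)" "node_ok a r' ts"
     "\<forall>t\<in>set ts. wf_tree Cc Af Rf t" by (auto simp: r'_def)
  have injr: "inj_on \<rho> (rule_vars r')" using CNode.prems(2) by (auto intro: inj_on_subset simp: r'_def)
  have inj2: "inj_on (\<rho> \<circ> \<sigma>) (rule_vars r)" using wf(2) injr
    by (simp add: rule_vars_rename comp_inj_on r'_def)
  from wf(3) obtain q Zs targs where h: "head r' = Atm q (map Var Zs)" "a = Atm q targs" "length Zs = length targs"
     and c: "if body r' = [] then ts = [TLeaf] else map label ts = map (\<lambda>s. Some (subst_atm (mk_subst Zs targs) s)) (body r')"
    unfolding node_ok_def by blast
  have fr: "\<forall>s\<in>set (body r'). \<forall>y\<in>vars_atm s - set Zs. \<theta> (\<rho> y) = Var (\<rho> y)"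
    using CNode.prems(3) h(1) by (auto simp: r'_def[symmetric])
  have hd: "head (rename_rule \<rho> r') = Atm q (map Var (map \<rho> Zs))"
    by (simp add: head_rename h(1) del: subst_atm.simps)
  have bd: "body (rename_rule \<rho> r') = map (subst_atm (Var \<circ> \<rho>)) (body r')"
    by (simp add: body_rename)
  have sa: "subst_atm \<eta> a = Atm q (map (subst_trm \<eta>) targs)" by (simp add: h(2))
  have no: "node_ok (subst_atm \<eta> a) (rename_rule \<rho> r') (map (gmap \<rho> \<theta>) ts)"
  proof (cases "body r' = []")
    case True then show ?thesis using c h(3) unfolding node_ok_def hd sa bd
      by (intro exI[of _ q] exI[of _ "map \<rho> Zs"] exI[of _ "map (subst_trm \<eta>) targs"]) simp
  next
    case False
    then have c': "map label ts = map (\<lambda>s. Some (subst_atm (mk_subst Zs targs) s)) (body r')"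
      using c by simp
    have "map label (map (gmap \<rho> \<theta>) ts) = map (map_option (subst_atm \<eta>)) (map label ts)"
      by (simp add: label_gmap \<eta>_def)
    also have "\<dots> = map (\<lambda>s. Some (subst_atm \<eta> (subst_atm (mk_subst Zs targs) s))) (body r')"
      unfolding c' by simp
    also have "\<dots> = map (\<lambda>s. Some (subst_atm (mk_subst (map \<rho> Zs) (map (subst_trm \<eta>) targs)) s))
                     (map (subst_atm (Var \<circ> \<rho>)) (body r'))"
    proof -
      have "subst_atm \<eta> (subst_atm (mk_subst Zs targs) s) =
            subst_atm (mk_subst (map \<rho> Zs) (map (subst_trm \<eta>) targs)) (subst_atm (Var \<circ> \<rho>) s)"
        if s: "s \<in> set (body r')" for s
      proof -
        have "inj_on \<rho> (set Zs \<union> vars_atm s)"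
          by (rule inj_on_subset[OF injr]) (use s h(1) in \<open>auto simp: rule_vars_def\<close>)
        then show ?thesis unfolding \<eta>_def using key[of \<rho> Zs s targs \<theta>] h(3) fr s by simp
      qed
      then show ?thesis by simp
    qed
    finally show ?thesis using h(3) False unfolding node_ok_def hd sa bd
      by (intro exI[of _ q] exI[of _ "map \<rho> Zs"] exI[of _ "map (subst_trm \<eta>) targs"]) simp
  qed
  have ch: "\<forall>t\<in>set ts. wf_tree Cc Af Rf (gmap \<rho> \<theta> t)"
  proof
    fix t assume t: "t \<in> set ts"
    show "wf_tree Cc Af Rf (gmap \<rho> \<theta> t)"
    proof (rule CNode.IH[OF t])
      show "wf_tree Cc Af Rf t" using wf(4) t by blast
      show "inj_on \<rho> (tvars t)" by (rule inj_on_subset[OF CNode.prems(2)]) (use t in auto)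
      show "\<forall>A\<in>set (fresh_vars t). \<forall>y\<in>A. \<theta> (\<rho> y) = Var (\<rho> y)"
        using CNode.prems(3) t by auto
    qed (use CNode.prems in auto)
  qed
  show ?case using wf(1) inj2 no ch by (simp add: rename_rule_comp r'_def \<eta>_def)
qed

lemma gen:
  assumes "wf_tree Cc Af Rf T" "label T = Some (subst_atm \<theta> a')"
    "\<forall>A\<in>set (fresh_vars T). \<forall>y\<in>A. \<theta> y = Var y" "pred_closed Cc" "pred_closed Af"
  shows "\<exists>T'. wf_tree Cc Af Rf T' \<and> label T' = Some a' \<and> fresh_vars T' = fresh_vars T \<and>
     leaves T = subst_atm \<theta> ` leaves T' \<and> rules_used T' = rules_used T \<and>
     (\<forall>l\<in>leaves T'. vars_atm l \<subseteq> vars_atm a' \<union> \<Union>(set (fresh_vars T)))"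
  using assms
proof (induction T arbitrary: a')
  case (CLeaf a)
  then show ?case by (intro exI[of _ "CLeaf a'"]) (auto simp: pc_subst)
next
  case TLeaf then show ?case by simp
next
  case (CNode a r \<sigma> ts)
  define r' where "r' = rename_rule \<sigma> r"
  from CNode.prems have wf: "r \<in> Rf" "inj_on \<sigma> (rule_vars r)" "node_ok a r' ts"
     "\<forall>t\<in>set ts. wf_tree Cc Af Rf t" and a: "a = subst_atm \<theta> a'" by (auto simp: r'_def)
  from wf(3) obtain q Zs targs where h: "head r' = Atm q (map Var Zs)" "a = Atm q targs" "length Zs = length targs"
     and c: "if body r' = [] then ts = [TLeaf] else map label ts = map (\<lambda>s. Some (subst_atm (mk_subst Zs targs) s)) (body r')"
    unfolding node_ok_def by blast
  obtain targs' where a': "a' = Atm q targs'" and tg: "targs = map (subst_trm \<theta>) targs'"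
    using a h(2) by (cases a') auto
  have len: "length Zs = length targs'" using h(3) tg by simp
  define FV where "FV = \<Union> (set (map vars_atm (body r'))) - vars_atm (head r')"
  have fvT: "fresh_vars (CNode a r \<sigma> ts) = FV # concat (map fresh_vars ts)"
    by (simp add: FV_def r'_def)
  have fr: "\<forall>s\<in>set (body r'). \<forall>y\<in>vars_atm s - set Zs. \<theta> y = Var y"
  proof -
    have "\<forall>y\<in>FV. \<theta> y = Var y" using CNode.prems(3) unfolding fvT by simp
    then show ?thesis using h(1) unfolding FV_def by auto
  qed
  show ?case
  proof (cases "body r' = []")
    case True
    then have ts: "ts = [TLeaf]" using c by simp
    have "node_ok a' r' ts" unfolding node_ok_def using h(1) a' len True ts by auto
    then show ?thesis using wf ts a' by (intro exI[of _ "CNode a' r \<sigma> ts"]) (auto simp: r'_def)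
  next
    case False
    then have c': "map label ts = map (\<lambda>s. Some (subst_atm (mk_subst Zs targs) s)) (body r')"
      using c by simp
    define n where "n = length ts"
    have nl: "length (body r') = n" using arg_cong[OF c', of length] by (simp add: n_def)
    define lab where "lab i = subst_atm (mk_subst Zs targs') (body r' ! i)" for i
    have "\<forall>i<n. \<exists>T'. wf_tree Cc Af Rf T' \<and> label T' = Some (lab i) \<and> fresh_vars T' = fresh_vars (ts ! i) \<and>
       leaves (ts ! i) = subst_atm \<theta> ` leaves T' \<and> rules_used T' = rules_used (ts ! i) \<and>
       (\<forall>l\<in>leaves T'. vars_atm l \<subseteq> vars_atm (lab i) \<union> \<Union>(set (fresh_vars (ts ! i))))"
    proof (intro allI impI)
      fix i assume i: "i < n"
      have ti: "ts ! i \<in> set ts" using i by (simp add: n_def)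
      have bi: "body r' ! i \<in> set (body r')" using i nl by simp
      have "label (ts ! i) = Some (subst_atm (mk_subst Zs targs) (body r' ! i))"
        using arg_cong[OF c', of "\<lambda>l. l ! i"] i nl by (simp add: n_def)
      also have "\<dots> = Some (subst_atm \<theta> (lab i))"
        unfolding lab_def tg using key_id[OF len, of "body r' ! i" \<theta>] fr bi by simp
      finally have li: "label (ts ! i) = Some (subst_atm \<theta> (lab i))" .
      show "\<exists>T'. wf_tree Cc Af Rf T' \<and> label T' = Some (lab i) \<and> fresh_vars T' = fresh_vars (ts ! i) \<and>
       leaves (ts ! i) = subst_atm \<theta> ` leaves T' \<and> rules_used T' = rules_used (ts ! i) \<and>
       (\<forall>l\<in>leaves T'. vars_atm l \<subseteq> vars_atm (lab i) \<union> \<Union>(set (fresh_vars (ts ! i))))"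
      proof (rule CNode.IH[OF ti])
        show "wf_tree Cc Af Rf (ts ! i)" using wf(4) ti by blast
        show "\<forall>A\<in>set (fresh_vars (ts ! i)). \<forall>y\<in>A. \<theta> y = Var y"
          using CNode.prems(3) ti by auto
      qed (use li CNode.prems in auto)
    qed
    then obtain f where f: "\<forall>i<n. wf_tree Cc Af Rf (f i) \<and> label (f i) = Some (lab i) \<and> fresh_vars (f i) = fresh_vars (ts ! i) \<and>
       leaves (ts ! i) = subst_atm \<theta> ` leaves (f i) \<and> rules_used (f i) = rules_used (ts ! i) \<and>
       (\<forall>l\<in>leaves (f i). vars_atm l \<subseteq> vars_atm (lab i) \<union> \<Union>(set (fresh_vars (ts ! i))))"
      by metis
    define ts' where "ts' = map f [0..<n]"
    have l1: "map label ts' = map (\<lambda>s. Some (subst_atm (mk_subst Zs targs') s)) (body r')"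
      by (rule nth_equalityI) (use f nl in \<open>auto simp: ts'_def lab_def\<close>)
    have no: "node_ok a' r' ts'" unfolding node_ok_def using h(1) a' len False l1 by auto
    have m1: "map fresh_vars ts' = map fresh_vars ts"
      by (rule nth_equalityI) (use f in \<open>auto simp: ts'_def n_def\<close>)
    have m2: "map rules_used ts' = map rules_used ts"
      by (rule nth_equalityI) (use f in \<open>auto simp: ts'_def n_def\<close>)
    have m3: "map leaves ts = map (\<lambda>t. subst_atm \<theta> ` leaves t) ts'"
      by (rule nth_equalityI) (use f in \<open>auto simp: ts'_def n_def\<close>)
    have wts: "\<forall>t\<in>set ts'. wf_tree Cc Af Rf t" using f by (auto simp: ts'_def)
    have lv: "\<forall>l\<in>leaves (CNode a' r \<sigma> ts'). vars_atm l \<subseteq> vars_atm a' \<union> \<Union>(set (fresh_vars (CNode a r \<sigma> ts)))"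
    proof
      fix l assume "l \<in> leaves (CNode a' r \<sigma> ts')"
      then obtain i where i: "i < n" and l: "l \<in> leaves (f i)" by (auto simp: ts'_def)
      have bi: "body r' ! i \<in> set (body r')" using i nl by simp
      have 1: "vars_atm l \<subseteq> vars_atm (lab i) \<union> \<Union>(set (fresh_vars (ts ! i)))" using f i l by blast
      have 2: "vars_atm (lab i) \<subseteq> vars_atm a' \<union> FV"
        using vars_mk_subst[OF len, of "body r' ! i"] bi h(1) a' unfolding lab_def FV_def by auto
      have 3: "\<Union>(set (fresh_vars (ts ! i))) \<subseteq> \<Union>(set (fresh_vars (CNode a r \<sigma> ts)))"
        unfolding fvT using i nth_mem[of i ts] by (force simp: n_def)
      show "vars_atm l \<subseteq> vars_atm a' \<union> \<Union>(set (fresh_vars (CNode a r \<sigma> ts)))"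
        using 1 2 3 unfolding fvT by auto
    qed
    show ?thesis
    proof (intro exI[of _ "CNode a' r \<sigma> ts'"] conjI)
      show "wf_tree Cc Af Rf (CNode a' r \<sigma> ts')" using wf(1,2) no wts by (simp add: r'_def)
      show "fresh_vars (CNode a' r \<sigma> ts') = fresh_vars (CNode a r \<sigma> ts)"
        using m1 by simp
      show "leaves (CNode a r \<sigma> ts) = subst_atm \<theta> ` leaves (CNode a' r \<sigma> ts')"
        using m3 by (simp add: image_Union)
      show "rules_used (CNode a' r \<sigma> ts') = rules_used (CNode a r \<sigma> ts)"
        using m2 by simp
    qed (use lv in auto)
  qed
qed

lemma fresh_list:
  assumes "infinite (UNIV :: 'v set)" "finite (W :: 'v set)"
  shows "\<exists>Xs. distinct Xs \<and> length Xs = n \<and> set Xs \<inter> W = {}"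
proof -
  have "infinite (UNIV - W)" using assms by (simp add: Diff_infinite_finite)
  then obtain B where B: "finite B" "card B = n" "B \<subseteq> UNIV - W"
    using infinite_arbitrarily_large by blast
  obtain Xs where "set Xs = B" "distinct Xs" using finite_distinct_list[OF B(1)] by blast
  then show ?thesis using B distinct_card by (intro exI[of _ Xs]) fastforce
qed

lemma inj_away:
  assumes "infinite (UNIV :: 'v set)" "finite (S :: 'v set)" "finite (W :: 'v set)"
  shows "\<exists>f :: 'v \<Rightarrow> 'v. inj_on f S \<and> f ` S \<inter> W = {}"
proof -
  obtain Xs where Xs: "distinct Xs" "length Xs = card S" "set Xs \<inter> W = {}"
    using fresh_list[OF assms(1,3)] by blast
  have "card S \<le> card (set Xs)" using Xs by (simp add: distinct_card)
  then obtain f where "f ` S \<subseteq> set Xs" "inj_on f S"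
    using card_le_inj[OF assms(2)] by blast
  then show ?thesis using Xs(3) by blast
qed

lemma ra_facts:
  assumes "renamed_apart s T"
  shows "\<forall>A\<in>set (fresh_vars T). A \<inter> vars_atm s = {}"
    "\<forall>i<length (fresh_vars T). \<forall>j<length (fresh_vars T). i \<noteq> j \<longrightarrow> fresh_vars T ! i \<inter> fresh_vars T ! j = {}"
  using assms unfolding renamed_apart_def Let_def by (metis in_set_conv_nth)+

theorem proposition5p7:
  fixes Lc Cc :: "('p, 'f, 'v) atm set" and Rf :: "('p, 'f, 'v) rule set"
    and CT :: "('d, 'f, 'p) struct set" and Af :: "('p, 'f, 'v) atm set"
    and ctr :: "('p, 'f, 'v) atm \<Rightarrow> ('p, 'f, 'v) atm" and eqp :: 'p
    and C A :: "('p, 'f, 'v) atm set" and R :: "('p, 'f, 'v) rule set"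
    and p :: 'p and ts :: "('f, 'v) trm list"
  assumes "caba_framework Lc Cc Rf CT Af ctr eqp"
  shows "tight_arg Lc Cc Rf CT Af C A R (Atm p ts) \<longleftrightarrow>
    (\<exists>Xs C' A'. mg_arg Lc Cc Rf CT Af C' A' R (Atm p (map Var Xs)) \<and>
       length Xs = length ts \<and>
       (\<Union> (vars_atm ` (C' \<union> A')) - set Xs) \<inter> \<Union> (set (map vars_trm ts)) = {} \<and>
       C = subst_atm (mk_subst Xs ts) ` C' \<and>
       A = subst_atm (mk_subst Xs ts) ` A' \<and>
       consistent CT (subst_atm (mk_subst Xs ts) ` C'))"
proof -
  from assms have inf: "infinite (UNIV :: 'v set)" and pcL: "pred_closed Lc"
    and pcC: "pred_closed Cc" and pcA: "pred_closed Af"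
    unfolding caba_framework_def by auto
  show ?thesis
  proof
    assume "tight_arg Lc Cc Rf CT Af C A R (Atm p ts)"
    then obtain T where s: "Atm p ts \<in> Lc - Cc" and sub: "C \<subseteq> Cc" "A \<subseteq> Af" "R \<subseteq> Rf"
      and cons: "consistent CT C" and T: "wf_tree Cc Af Rf T" "label T = Some (Atm p ts)"
      "renamed_apart (Atm p ts) T" "C = leaves T \<inter> Cc" "A = leaves T \<inter> Af" "R = rules_used T"
      unfolding tight_arg_def by blast
    obtain Xs where Xs: "distinct Xs" "length Xs = length ts"
      "set Xs \<inter> (tvars T \<union> \<Union>(set (map vars_trm ts))) = {}"
      using fresh_list[OF inf, of "tvars T \<union> \<Union>(set (map vars_trm ts))" "length ts"] by auto
    define \<theta> where "\<theta> = mk_subst Xs ts"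
    have s\<theta>: "subst_atm \<theta> (Atm p (map Var Xs)) = Atm p ts"
      using mk_subst_Vars[OF Xs(1,2)] by (simp add: \<theta>_def)
    have fix\<theta>: "\<forall>A\<in>set (fresh_vars T). \<forall>y\<in>A. \<theta> y = Var y"
    proof (intro ballI)
      fix A y assume "A \<in> set (fresh_vars T)" "y \<in> A"
      then have "y \<in> tvars T" using fresh_sub_tvars by blast
      then have "y \<notin> set Xs" using Xs(3) by blast
      then show "\<theta> y = Var y" unfolding \<theta>_def by (rule mk_subst_notin)
    qed
    have lab: "label T = Some (subst_atm \<theta> (Atm p (map Var Xs)))" using T(2) s\<theta> by simp
    from gen[OF T(1) lab fix\<theta> pcC pcA] obtain T' where T'all: "wf_tree Cc Af Rf T' \<and> label T' = Some (Atm p (map Var Xs)) \<and>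
      fresh_vars T' = fresh_vars T \<and> leaves T = subst_atm \<theta> ` leaves T' \<and> rules_used T' = rules_used T \<and>
      (\<forall>l\<in>leaves T'. vars_atm l \<subseteq> vars_atm (Atm p (map Var Xs) :: ('p, 'f, 'v) atm) \<union> \<Union>(set (fresh_vars T)))"
      ..
    have T': "wf_tree Cc Af Rf T'" "label T' = Some (Atm p (map Var Xs))"
      "fresh_vars T' = fresh_vars T" "leaves T = subst_atm \<theta> ` leaves T'" "rules_used T' = rules_used T"
      "\<forall>l\<in>leaves T'. vars_atm l \<subseteq> vars_atm (Atm p (map Var Xs) :: ('p, 'f, 'v) atm) \<union> \<Union>(set (fresh_vars T))"
      using T'all by blast+
    define C' where "C' = leaves T' \<inter> Cc"
    define A' where "A' = leaves T' \<inter> Af"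
    have CC: "C = subst_atm \<theta> ` C'" unfolding T(4) T'(4) C'_def using pc_subst[OF pcC] by auto
    have AA: "A = subst_atm \<theta> ` A'" unfolding T(5) T'(4) A'_def using pc_subst[OF pcA] by auto
    have ra: "\<forall>A\<in>set (fresh_vars T). A \<inter> \<Union>(set (map vars_trm ts)) = {}"
      using ra_facts(1)[OF T(3)] by simp
    have consC': "consistent CT C'"
      unfolding consistent_def
    proof
      show "finite C'" by (simp add: C'_def)
      show "\<forall>M\<in>CT. \<exists>v. \<forall>c\<in>C'. holds_atm M v c"
      proof
        fix M assume "M \<in> CT"
        then obtain v where "\<forall>c\<in>C. holds_atm M v c" using cons unfolding consistent_def by blast
        then have "\<forall>c\<in>C'. holds_atm M (\<lambda>x. eval_trm M v (\<theta> x)) c"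
          unfolding CC by (simp add: holds_subst)
        then show "\<exists>v. \<forall>c\<in>C'. holds_atm M v c" by blast
      qed
    qed
    have raT': "renamed_apart (Atm p (map Var Xs)) T'"
      unfolding renamed_apart_def Let_def T'(3)
    proof (intro conjI allI impI)
      fix i assume "i < length (fresh_vars T)"
      then have "fresh_vars T ! i \<subseteq> tvars T" using fresh_sub_tvars nth_mem by blast
      then show "fresh_vars T ! i \<inter> vars_atm (Atm p (map Var Xs)) = {}" using Xs(3) by auto
    next
      fix i j assume "i < length (fresh_vars T)" "j < length (fresh_vars T)" "i \<noteq> j"
      then show "fresh_vars T ! i \<inter> fresh_vars T ! j = {}" using ra_facts(2)[OF T(3)] by blast
    qed
    have sL: "Atm p (map Var Xs) \<in> Lc - Cc"
    proof -
      have "(Atm p ts \<in> Lc) = (Atm p (map Var Xs) \<in> Lc)"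
        using pc_subst[OF pcL, of \<theta> "Atm p (map Var Xs)"] unfolding s\<theta> .
      moreover have "(Atm p ts \<in> Cc) = (Atm p (map Var Xs) \<in> Cc)"
        using pc_subst[OF pcC, of \<theta> "Atm p (map Var Xs)"] unfolding s\<theta> .
      ultimately show ?thesis using s by blast
    qed
    have tg: "tight_arg Lc Cc Rf CT Af C' A' R (Atm p (map Var Xs))"
      unfolding tight_arg_def
      by (intro conjI exI[of _ T'] sL consC' T'(1) T'(2) raT' sub(3)) (auto simp: C'_def A'_def T(6) T'(5))
    have mg: "mg_arg Lc Cc Rf CT Af C' A' R (Atm p (map Var Xs))"
      unfolding mg_arg_def using tg Xs(1) by blast
    have dj: "(\<Union> (vars_atm ` (C' \<union> A')) - set Xs) \<inter> \<Union> (set (map vars_trm ts)) = {}"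
    proof -
      have "\<Union> (vars_atm ` (C' \<union> A')) - set Xs \<subseteq> \<Union>(set (fresh_vars T))"
        using T'(6) by (fastforce simp: C'_def A'_def)
      then show ?thesis using ra by blast
    qed
    show "\<exists>Xs C' A'. mg_arg Lc Cc Rf CT Af C' A' R (Atm p (map Var Xs)) \<and>
       length Xs = length ts \<and>
       (\<Union> (vars_atm ` (C' \<union> A')) - set Xs) \<inter> \<Union> (set (map vars_trm ts)) = {} \<and>
       C = subst_atm (mk_subst Xs ts) ` C' \<and>
       A = subst_atm (mk_subst Xs ts) ` A' \<and>
       consistent CT (subst_atm (mk_subst Xs ts) ` C')"
      by (intro exI[of _ Xs] exI[of _ C'] exI[of _ A'] conjI mg Xs(2) dj)
         (use CC AA cons in \<open>simp_all add: \<theta>_def\<close>)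
  next
    assume "\<exists>Xs C' A'. mg_arg Lc Cc Rf CT Af C' A' R (Atm p (map Var Xs)) \<and>
       length Xs = length ts \<and>
       (\<Union> (vars_atm ` (C' \<union> A')) - set Xs) \<inter> \<Union> (set (map vars_trm ts)) = {} \<and>
       C = subst_atm (mk_subst Xs ts) ` C' \<and>
       A = subst_atm (mk_subst Xs ts) ` A' \<and>
       consistent CT (subst_atm (mk_subst Xs ts) ` C')"
    then obtain Xs C' A' where mg: "mg_arg Lc Cc Rf CT Af C' A' R (Atm p (map Var Xs))"
      and len: "length Xs = length ts"
      and dj: "(\<Union> (vars_atm ` (C' \<union> A')) - set Xs) \<inter> \<Union> (set (map vars_trm ts)) = {}"
      and CC: "C = subst_atm (mk_subst Xs ts) ` C'" and AA: "A = subst_atm (mk_subst Xs ts) ` A'"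
      and cons: "consistent CT (subst_atm (mk_subst Xs ts) ` C')" by blast
    define \<theta> where "\<theta> = mk_subst Xs ts"
    from mg have tg: "tight_arg Lc Cc Rf CT Af C' A' R (Atm p (map Var Xs))" unfolding mg_arg_def by blast
    then have s: "Atm p (map Var Xs) \<in> Lc - Cc" and sub: "C' \<subseteq> Cc" "A' \<subseteq> Af" "R \<subseteq> Rf"
      unfolding tight_arg_def by blast+
    from tg obtain T' where
      T': "wf_tree Cc Af Rf T'" "label T' = Some (Atm p (map Var Xs))"
      "renamed_apart (Atm p (map Var Xs)) T'" "C' = leaves T' \<inter> Cc" "A' = leaves T' \<inter> Af" "R = rules_used T'"
      unfolding tight_arg_def by (elim conjE exE) blast
    have dXs: "distinct Xs"
    proof -
      from mg obtain p' Xs' where "distinct Xs'" "(Atm p (map Var Xs) :: ('p, 'f, 'v) atm) = Atm p' (map Var Xs')"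
        unfolding mg_arg_def by blast
      moreover have "inj Var" by (simp add: inj_def)
      ultimately show ?thesis by (metis atm.inject inj_map_eq_map)
    qed
    have s\<theta>: "subst_atm \<theta> (Atm p (map Var Xs)) = Atm p ts"
      using mk_subst_Vars[OF dXs len] by (simp add: \<theta>_def)
    define FT where "FT = \<Union>(set (fresh_vars T'))"
    define VT where "VT = \<Union>(set (map vars_trm ts))"
    define S where "S = FT \<inter> VT"
    define W where "W = tvars T' \<union> VT \<union> set Xs"
    have fW: "finite W" by (simp add: W_def VT_def)
    have FTW: "FT \<subseteq> tvars T'" using fresh_sub_tvars by (auto simp: FT_def)
    have fS: "finite S" using FTW by (auto simp: S_def intro: finite_subset)
    obtain f where f: "inj_on f S" "f ` S \<inter> W = {}" using inj_away[OF inf fS fW] by blast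
    define \<rho> where "\<rho> x = (if x \<in> S then f x else x)" for x
    have SW: "S \<subseteq> W" using FTW by (auto simp: S_def W_def)
    have injW: "inj_on \<rho> W"
    proof (rule inj_onI)
      fix x y assume xy: "x \<in> W" "y \<in> W" "\<rho> x = \<rho> y"
      show "x = y"
      proof (cases "x \<in> S"; cases "y \<in> S")
        assume "x \<in> S" "y \<in> S" then show ?thesis using xy f(1) by (auto simp: \<rho>_def inj_on_def)
      next
        assume "x \<in> S" "y \<notin> S" then show ?thesis using xy f(2) by (auto simp: \<rho>_def)
      next
        assume "x \<notin> S" "y \<in> S" then show ?thesis using xy f(2) by (auto simp: \<rho>_def)
      next
        assume "x \<notin> S" "y \<notin> S" then show ?thesis using xy by (auto simp: \<rho>_def)
      qed
    qed
    have FXs: "FT \<inter> set Xs = {}" using ra_facts(1)[OF T'(3)] by (auto simp: FT_def)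
    have \<rho>Xs: "\<rho> x = x" if "x \<in> set Xs" for x using that FXs by (auto simp: \<rho>_def S_def)
    have \<rho>F: "\<rho> y \<notin> set Xs \<and> \<rho> y \<notin> VT" if "y \<in> FT" for y
    proof (cases "y \<in> S")
      case True then show ?thesis using f(2) by (auto simp: \<rho>_def W_def)
    next
      case False then show ?thesis using that FXs by (auto simp: \<rho>_def S_def)
    qed
    have cond: "\<forall>A\<in>set (fresh_vars T'). \<forall>y\<in>A. \<theta> (\<rho> y) = Var (\<rho> y)"
      using \<rho>F by (auto simp: FT_def \<theta>_def intro!: mk_subst_notin)
    have injT: "inj_on \<rho> (tvars T')" by (rule inj_on_subset[OF injW]) (auto simp: W_def)
    define T where "T = gmap \<rho> \<theta> T'"
    have wfT: "wf_tree Cc Af Rf T" unfolding T_def by (rule wf_gmap[OF T'(1) injT cond pcC pcA])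
    have lT: "label T = Some (Atm p ts)"
    proof -
      have "subst_atm (\<lambda>x. \<theta> (\<rho> x)) (Atm p (map Var Xs)) = subst_atm \<theta> (Atm p (map Var Xs))"
        by (rule subst_atm_cong) (simp add: \<rho>Xs)
      then show ?thesis using s\<theta> T'(2) by (simp add: T_def label_gmap del: subst_atm.simps)
    qed
    have fT: "fresh_vars T = map ((`) \<rho>) (fresh_vars T')" unfolding T_def by (rule fresh_gmap[OF injT])
    have raT: "renamed_apart (Atm p ts) T"
      unfolding renamed_apart_def Let_def fT
    proof (intro conjI allI impI)
      fix i assume i: "i < length (map ((`) \<rho>) (fresh_vars T'))"
      then have "fresh_vars T' ! i \<in> set (fresh_vars T')" by simp
      then have "fresh_vars T' ! i \<subseteq> FT" unfolding FT_def by blast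
      then show "map ((`) \<rho>) (fresh_vars T') ! i \<inter> vars_atm (Atm p ts) = {}"
        using i \<rho>F by (auto simp: VT_def)
    next
      fix i j assume ij: "i < length (map ((`) \<rho>) (fresh_vars T'))" "j < length (map ((`) \<rho>) (fresh_vars T'))" "i \<noteq> j"
      have sub2: "fresh_vars T' ! i \<subseteq> W" "fresh_vars T' ! j \<subseteq> W"
      proof -
        have "fresh_vars T' ! i \<in> set (fresh_vars T')" "fresh_vars T' ! j \<in> set (fresh_vars T')"
          using ij by simp_all
        then show "fresh_vars T' ! i \<subseteq> W" "fresh_vars T' ! j \<subseteq> W"
          using FTW unfolding FT_def W_def by blast+
      qed
      have "\<rho> ` (fresh_vars T' ! i) \<inter> \<rho> ` (fresh_vars T' ! j) = \<rho> ` (fresh_vars T' ! i \<inter> fresh_vars T' ! j)"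
        by (rule inj_on_image_Int[OF injW sub2, symmetric])
      also have "\<dots> = {}" using ra_facts(2)[OF T'(3)] ij by auto
      finally show "map ((`) \<rho>) (fresh_vars T') ! i \<inter> map ((`) \<rho>) (fresh_vars T') ! j = {}"
        using ij by simp
    qed
    have lvT: "leaves T = subst_atm \<theta> ` leaves T'"
    proof -
      have "subst_atm (\<lambda>x. \<theta> (\<rho> x)) l = subst_atm \<theta> l" if l: "l \<in> leaves T'" for l
      proof (rule subst_atm_cong)
        fix x assume x: "x \<in> vars_atm l"
        have "l \<in> C' \<union> A'" using l leaves_wf[OF T'(1)] T'(4,5) by auto
        then have "x \<in> set Xs \<or> x \<notin> VT" using x dj by (auto simp: VT_def)
        then have "\<rho> x = x"
        proof
          assume "x \<in> set Xs" then show ?thesis by (rule \<rho>Xs)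
        next
          assume "x \<notin> VT" then show ?thesis by (simp add: \<rho>_def S_def)
        qed
        then show "\<theta> (\<rho> x) = \<theta> x" by simp
      qed
      then show ?thesis unfolding T_def leaves_gmap by (auto intro: image_cong)
    qed
    have CT: "C = leaves T \<inter> Cc" unfolding lvT CC T'(4) \<theta>_def using pc_subst[OF pcC] by auto
    have AT: "A = leaves T \<inter> Af" unfolding lvT AA T'(5) \<theta>_def using pc_subst[OF pcA] by auto
    have sL: "Atm p ts \<in> Lc - Cc"
    proof -
      have "(Atm p ts \<in> Lc) = (Atm p (map Var Xs) \<in> Lc)"
        using pc_subst[OF pcL, of \<theta> "Atm p (map Var Xs)"] unfolding s\<theta> .
      moreover have "(Atm p ts \<in> Cc) = (Atm p (map Var Xs) \<in> Cc)"
        using pc_subst[OF pcC, of \<theta> "Atm p (map Var Xs)"] unfolding s\<theta> .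
      ultimately show ?thesis using s by blast
    qed
    have CsC: "C \<subseteq> Cc" using CT by blast
    have AsA: "A \<subseteq> Af" using AT by blast
    have consC: "consistent CT C" using cons CC by (simp add: \<theta>_def)
    have RT: "R = rules_used T" unfolding T_def rules_gmap by (rule T'(6))
    show "tight_arg Lc Cc Rf CT Af C A R (Atm p ts)"
      unfolding tight_arg_def
      by (intro conjI exI[of _ T] sL CsC AsA sub(3) consC wfT lT raT CT AT RT)
  qed
qed

end
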